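(* For every integer $q \ge 2$, the complete bipartite graph $K_{q-1,(q-1)^{q-1}}$ (viewed as an undirected graph) is $q$-solvable.
   Context: All graphs are finite. A directed graph $D=(V,E)$ has arcs $E \subseteq \{(u,v)\in V^2 : u \neq v\}$; bidirectional pairs are allowed. An undirected graph is identified with the directed graph having both arcs $(u,v)$ and $(v,u)$ for each edge $\{u,v\}$. The in-neighbourhood of $v$ is $N^-(v)=\{u : (u,v)\in E\}$. For an integer $q\ge 2$ let $[q]=\{0,1,\dots,q-1\}$, with arithmetic modulo $q$ where needed. A $D$-function over $[q]$ is a map $f=(f_v)_{v\in V}:[q]^V\to[q]^V$ such that each $f_v(x)$ depends only on $(x_u)_{u\in N^-(v)}$. The graph $D$ is $q$-solvable if there is a $D$-function $f$ over $[q]$ such that for every $x\in[q]^V$ there exists a vertex $v$ with $f_v(x)=x_v$. *)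

theory Defs
  imports Main
begin

definition digraph :: "'a set \<Rightarrow> ('a \<times> 'a) set \<Rightarrow> bool" where
  "digraph V E \<longleftrightarrow> finite V \<and> E \<subseteq> {(u,v). u \<in> V \<and> v \<in> V \<and> u \<noteq> v}"

definition in_nbhd :: "('a \<times> 'a) set \<Rightarrow> 'a \<Rightarrow> 'a set" where
  "in_nbhd E v = {u. (u, v) \<in> E}"

definition configs :: "'a set \<Rightarrow> nat \<Rightarrow> ('a \<Rightarrow> nat) set" where
  "configs V q = {x. (\<forall>v\<in>V. x v < q) \<and> (\<forall>v. v \<notin> V \<longrightarrow> x v = 0)}"

definition D_function :: "'a set \<Rightarrow> ('a \<times> 'a) set \<Rightarrow> nat \<Rightarrow> ('a \<Rightarrow> ('a \<Rightarrow> nat) \<Rightarrow> nat) \<Rightarrow> bool" where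
  "D_function V E q f \<longleftrightarrow>
     (\<forall>v\<in>V. \<forall>x\<in>configs V q. f v x < q) \<and>
     (\<forall>v\<in>V. \<forall>x\<in>configs V q. \<forall>y\<in>configs V q.
        (\<forall>u\<in>in_nbhd E v. x u = y u) \<longrightarrow> f v x = f v y)"

definition q_solvable :: "'a set \<Rightarrow> ('a \<times> 'a) set \<Rightarrow> nat \<Rightarrow> bool" where
  "q_solvable V E q \<longleftrightarrow>
     (\<exists>f. D_function V E q f \<and> (\<forall>x\<in>configs V q. \<exists>v\<in>V. f v x = x v))"

text \<open>Complete bipartite graph K_{m,n} as an undirected graph (both arcs per edge).\<close>
definition Kmn_V :: "nat \<Rightarrow> nat \<Rightarrow> (nat + nat) set" where
  "Kmn_V m n = Inl ` {..<m} \<union> Inr ` {..<n}"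

definition Kmn_E :: "nat \<Rightarrow> nat \<Rightarrow> ((nat + nat) \<times> (nat + nat)) set" where
  "Kmn_E m n = {(Inl i, Inr j) | i j. i < m \<and> j < n} \<union> {(Inr j, Inl i) | i j. i < m \<and> j < n}"

end

theory Submission
  imports Defs
begin

fun Fh :: "nat list \<Rightarrow> nat list \<Rightarrow> nat" where
  "Fh (h#hs) (x#xs) = (if x = h then 0 else Suc (Fh hs xs))"
| "Fh _ _ = 0"

lemma Fh_le: "Fh h x \<le> length h"
  by (induction h x rule: Fh.induct) auto

lemma key:
  "\<forall>y. (\<forall>h. length h = k \<and> set h \<subseteq> {..<m} \<longrightarrow> y h \<le> k) \<longrightarrow>
     (\<exists>L. length L = k \<and> set L \<subseteq> {..<Suc m} \<and>
        (\<forall>x. length x = k \<and> set x \<subseteq> {..<Suc m} \<and>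
             (\<forall>h. length h = k \<and> set h \<subseteq> {..<m} \<longrightarrow> Fh h x \<noteq> y h) \<longrightarrow> (\<exists>i<k. x!i = L!i)))"
proof (induction k)
  case 0
  show ?case
  proof (intro allI impI)
    fix y :: "nat list \<Rightarrow> nat"
    assume "\<forall>h. length h = 0 \<and> set h \<subseteq> {..<m} \<longrightarrow> y h \<le> 0"
    then have "y [] = 0" by auto
    then show "\<exists>L. length L = 0 \<and> set L \<subseteq> {..<Suc m} \<and>
        (\<forall>x. length x = 0 \<and> set x \<subseteq> {..<Suc m} \<and>
             (\<forall>h. length h = 0 \<and> set h \<subseteq> {..<m} \<longrightarrow> Fh h x \<noteq> y h) \<longrightarrow> (\<exists>i<0. x!i = L!i))"
      by (intro exI[of _ "[]"]) auto
  qed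
next
  case (Suc k)
  show ?case
  proof (intro allI impI)
    fix y :: "nat list \<Rightarrow> nat"
    assume yb: "\<forall>h. length h = Suc k \<and> set h \<subseteq> {..<m} \<longrightarrow> y h \<le> Suc k"
    show "\<exists>L. length L = Suc k \<and> set L \<subseteq> {..<Suc m} \<and>
        (\<forall>x. length x = Suc k \<and> set x \<subseteq> {..<Suc m} \<and>
             (\<forall>h. length h = Suc k \<and> set h \<subseteq> {..<m} \<longrightarrow> Fh h x \<noteq> y h) \<longrightarrow> (\<exists>i<Suc k. x!i = L!i))"
    proof (cases "\<forall>c<m. \<exists>hs. length hs = k \<and> set hs \<subseteq> {..<m} \<and> y (c#hs) = 0")
      case True
      show ?thesis
      proof (intro exI[of _ "m # replicate k 0"] conjI allI impI)
        fix x :: "nat list"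
        assume x: "length x = Suc k \<and> set x \<subseteq> {..<Suc m} \<and>
             (\<forall>h. length h = Suc k \<and> set h \<subseteq> {..<m} \<longrightarrow> Fh h x \<noteq> y h)"
        then have lx: "length x = Suc k" and sx: "set x \<subseteq> {..<Suc m}"
          and ax: "\<forall>h. length h = Suc k \<and> set h \<subseteq> {..<m} \<longrightarrow> Fh h x \<noteq> y h" by blast+
        from lx obtain x0 xs where xe: "x = x0 # xs" by (cases x) auto
        have "x0 = m"
        proof (rule ccontr)
          assume "x0 \<noteq> m"
          with sx xe have "x0 < m" by auto
          with True obtain hs where hs: "length hs = k" "set hs \<subseteq> {..<m}" "y (x0#hs) = 0" by blast
          have "Fh (x0#hs) x \<noteq> y (x0#hs)" using ax[rule_format, of "x0#hs"] hs(1,2) \<open>x0 < m\<close> by simp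
          with xe hs(3) show False by simp
        qed
        then show "\<exists>i<Suc k. x!i = (m # replicate k 0)!i" using xe by (intro exI[of _ 0]) auto
      qed auto
    next
      case False
      then obtain c where c: "c < m" and nc: "\<not> (\<exists>hs. length hs = k \<and> set hs \<subseteq> {..<m} \<and> y (c#hs) = 0)"
        by blast
      have cy: "y (c#hs) \<noteq> 0" if "length hs = k" "set hs \<subseteq> {..<m}" for hs
        using nc that by metis
      define y' where "y' hs = y (c#hs) - 1" for hs
      have "\<forall>h. length h = k \<and> set h \<subseteq> {..<m} \<longrightarrow> y' h \<le> k"
      proof (intro allI impI)
        fix h assume h: "length h = k \<and> set h \<subseteq> {..<m}"
        then have "y (c#h) \<le> Suc k" using yb[rule_format, of "c#h"] c by auto
        then show "y' h \<le> k" unfolding y'_def by simp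
      qed
      with Suc.IH obtain L' where L': "length L' = k" "set L' \<subseteq> {..<Suc m}"
        "\<forall>x. length x = k \<and> set x \<subseteq> {..<Suc m} \<and>
             (\<forall>h. length h = k \<and> set h \<subseteq> {..<m} \<longrightarrow> Fh h x \<noteq> y' h) \<longrightarrow> (\<exists>i<k. x!i = L'!i)"
        by blast
      show ?thesis
      proof (intro exI[of _ "c # L'"] conjI allI impI)
        fix x :: "nat list"
        assume x: "length x = Suc k \<and> set x \<subseteq> {..<Suc m} \<and>
             (\<forall>h. length h = Suc k \<and> set h \<subseteq> {..<m} \<longrightarrow> Fh h x \<noteq> y h)"
        then have lx: "length x = Suc k" and sx: "set x \<subseteq> {..<Suc m}"
          and ax: "\<forall>h. length h = Suc k \<and> set h \<subseteq> {..<m} \<longrightarrow> Fh h x \<noteq> y h" by blast+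
        from lx obtain x0 xs where xe: "x = x0 # xs" by (cases x) auto
        show "\<exists>i<Suc k. x!i = (c # L')!i"
        proof (cases "x0 = c")
          case True then show ?thesis using xe by (intro exI[of _ 0]) auto
        next
          case False
          have "\<forall>h. length h = k \<and> set h \<subseteq> {..<m} \<longrightarrow> Fh h xs \<noteq> y' h"
          proof (intro allI impI)
            fix hs assume hs: "length hs = k \<and> set hs \<subseteq> {..<m}"
            then have "Fh (c#hs) x \<noteq> y (c#hs)" using ax[rule_format, of "c#hs"] c by auto
            then have "Suc (Fh hs xs) \<noteq> y (c#hs)" using xe False by simp
            moreover have "y (c#hs) \<noteq> 0" using cy hs by blast
            ultimately show "Fh hs xs \<noteq> y' hs" unfolding y'_def by auto
          qed
          moreover have "length xs = k \<and> set xs \<subseteq> {..<Suc m}" using lx sx xe by auto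
          ultimately obtain i where "i < k" "xs!i = L'!i" using L'(3) by blast
          then show ?thesis using xe by (intro exI[of _ "Suc i"]) auto
        qed
      qed (use L' c in auto)
    qed
  qed
qed


lemma nb_l: "j < n \<Longrightarrow> i < m \<Longrightarrow> Inr j \<in> in_nbhd (Kmn_E m n) (Inl i)"
  by (auto simp: in_nbhd_def Kmn_E_def)

lemma nb_r: "j < n \<Longrightarrow> i < m \<Longrightarrow> Inl i \<in> in_nbhd (Kmn_E m n) (Inr j)"
  by (auto simp: in_nbhd_def Kmn_E_def)

definition Lprop :: "nat \<Rightarrow> (nat list \<Rightarrow> nat) \<Rightarrow> nat list \<Rightarrow> bool" where
  "Lprop m y L \<longleftrightarrow> length L = m \<and> set L \<subseteq> {..<Suc m} \<and>
        (\<forall>x. length x = m \<and> set x \<subseteq> {..<Suc m} \<and>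
             (\<forall>h. length h = m \<and> set h \<subseteq> {..<m} \<longrightarrow> Fh h x \<noteq> y h) \<longrightarrow> (\<exists>i<m. x!i = L!i))"

lemma Lsel_ok:
  assumes "\<And>h. length h = m \<Longrightarrow> set h \<subseteq> {..<m} \<Longrightarrow> y h \<le> m"
  shows "Lprop m y (SOME L. Lprop m y L)"
proof -
  have "\<exists>L. Lprop m y L" using key[of m m] assms unfolding Lprop_def by blast
  then show ?thesis by (rule someI_ex)
qed

theorem theorem1:
  fixes q :: nat
  assumes "q \<ge> 2"
  shows "q_solvable (Kmn_V (q - 1) ((q - 1) ^ (q - 1))) (Kmn_E (q - 1) ((q - 1) ^ (q - 1))) q"
proof -
  define m where "m = q - 1"
  have qm: "q = Suc m" using assms unfolding m_def by auto
  define n where "n = m ^ m"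
  define H where "H = {h. set h \<subseteq> {..<m} \<and> length h = m}"
  have finH: "finite H" unfolding H_def by (rule finite_lists_length_eq) simp
  have cardH: "card H = n" unfolding H_def n_def by (simp add: card_lists_length_eq)
  obtain enc where enc: "bij_betw enc {0..<n} H"
    using ex_bij_betw_nat_finite[OF finH] cardH by auto
  define dec where "dec = inv_into {0..<n} enc"
  have dec1: "dec h < n" "enc (dec h) = h" if "h \<in> H" for h
    using that enc unfolding dec_def
    by (auto simp: bij_betw_def inv_into_into f_inv_into_f)
  have encH: "enc j \<in> H" if "j < n" for j
    using enc that by (auto simp: bij_betw_def)
  define xa :: "(nat + nat \<Rightarrow> nat) \<Rightarrow> nat list" where "xa x = map (\<lambda>i. x (Inl i)) [0..<m]" for x
  define Y :: "(nat + nat \<Rightarrow> nat) \<Rightarrow> nat list \<Rightarrow> nat" where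
    "Y x h = (if h \<in> H then x (Inr (dec h)) else 0)" for x h
  define f :: "nat + nat \<Rightarrow> (nat + nat \<Rightarrow> nat) \<Rightarrow> nat" where
    "f v x = (case v of Inl i \<Rightarrow> (SOME L. Lprop m (Y x) L) ! i | Inr j \<Rightarrow> Fh (enc j) (xa x))" for v x
  have Vl: "Inl i \<in> Kmn_V m n \<longleftrightarrow> i < m" for i by (auto simp: Kmn_V_def)
  have Vr: "Inr j \<in> Kmn_V m n \<longleftrightarrow> j < n" for j by (auto simp: Kmn_V_def)
  have Ybd: "Y x h \<le> m" if x: "x \<in> configs (Kmn_V m n) q" for x h
  proof (cases "h \<in> H")
    case True
    then have "Inr (dec h) \<in> Kmn_V m n" using dec1 Vr by blast
    then show ?thesis using x True qm unfolding Y_def configs_def by auto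
  next
    case False then show ?thesis unfolding Y_def by simp
  qed
  have LP: "Lprop m (Y x) (SOME L. Lprop m (Y x) L)" if "x \<in> configs (Kmn_V m n) q" for x
    by (rule Lsel_ok) (use Ybd[OF that] in auto)
  have xa_ok: "length (xa x) = m \<and> set (xa x) \<subseteq> {..<Suc m}" if x: "x \<in> configs (Kmn_V m n) q" for x
    using x qm Vl unfolding xa_def configs_def by auto
  have DF: "D_function (Kmn_V m n) (Kmn_E m n) q f"
    unfolding D_function_def
  proof (intro conjI ballI impI)
    fix v x assume v: "v \<in> Kmn_V m n" and x: "x \<in> configs (Kmn_V m n) q"
    show "f v x < q"
    proof (cases v)
      case (Inl i)
      then have "i < m" using v Vl by simp
      define L where "L = (SOME L. Lprop m (Y x) L)"
      have L: "length L = m" "set L \<subseteq> {..<Suc m}" using LP[OF x] unfolding L_def Lprop_def by auto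
      have "L ! i \<in> set L" using L(1) \<open>i < m\<close> by simp
      with L(2) have "L ! i < Suc m" by auto
      then show ?thesis using Inl qm unfolding f_def L_def by simp
    next
      case (Inr j)
      have "length (enc j) = m" using encH[of j] v Inr Vr unfolding H_def by auto
      then show ?thesis using Fh_le[of "enc j" "xa x"] Inr qm unfolding f_def by auto
    qed
  next
    fix v x y assume v: "v \<in> Kmn_V m n" and x: "x \<in> configs (Kmn_V m n) q"
      and y: "y \<in> configs (Kmn_V m n) q" and agree: "\<forall>u\<in>in_nbhd (Kmn_E m n) v. x u = y u"
    show "f v x = f v y"
    proof (cases v)
      case (Inl i)
      then have i: "i < m" using v Vl by simp
      have "Y x = Y y"
      proof
        fix h show "Y x h = Y y h"
          using agree Inl nb_l[OF dec1(1) i] unfolding Y_def by auto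
      qed
      then show ?thesis unfolding f_def Inl by simp
    next
      case (Inr j)
      then have j: "j < n" using v Vr by simp
      have "xa x = xa y" unfolding xa_def using agree Inr nb_r[OF j] by auto
      then show ?thesis unfolding f_def Inr by simp
    qed
  qed
  have "\<forall>x\<in>configs (Kmn_V m n) q. \<exists>v\<in>Kmn_V m n. f v x = x v"
  proof
    fix x assume x: "x \<in> configs (Kmn_V m n) q"
    show "\<exists>v\<in>Kmn_V m n. f v x = x v"
    proof (cases "\<exists>j<n. Fh (enc j) (xa x) = x (Inr j)")
      case True
      then obtain j where "j < n" "Fh (enc j) (xa x) = x (Inr j)" by blast
      then show ?thesis using Vr unfolding f_def by (intro bexI[of _ "Inr j"]) auto
    next
      case False
      have "\<forall>h. length h = m \<and> set h \<subseteq> {..<m} \<longrightarrow> Fh h (xa x) \<noteq> Y x h"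
      proof (intro allI impI)
        fix h assume "length h = m \<and> set h \<subseteq> {..<m}"
        then have hH: "h \<in> H" unfolding H_def by auto
        show "Fh h (xa x) \<noteq> Y x h"
          using False dec1[OF hH] hH unfolding Y_def by metis
      qed
      then obtain i where i: "i < m" "xa x ! i = (SOME L. Lprop m (Y x) L) ! i"
        using LP[OF x] xa_ok[OF x] unfolding Lprop_def by blast
      then have "x (Inl i) = f (Inl i) x" unfolding xa_def f_def by simp
      then show ?thesis using Vl i(1) by (intro bexI[of _ "Inl i"]) auto
    qed
  qed
  with DF have "q_solvable (Kmn_V m n) (Kmn_E m n) q" unfolding q_solvable_def by blast
  then show ?thesis unfolding m_def n_def .
qed

end
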